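(* Let $r\ge2$ and $\Lambda=\Phi^+_{A_{r+1}}\setminus\{\alpha_{r+1}\}$, where $\alpha_{r+1}=\varepsilon_{r+1}-\varepsilon_{r+2}$. Then \[K_{B_r}(\tilde\alpha_{B_r})=K_\Lambda(2\tilde\alpha_{A_{r+1}}-\alpha_1-\alpha_{r+1}),\] where $\tilde\alpha_{B_r}=\varepsilon_1+\varepsilon_2\in\mathbb{R}^r$ and $2\tilde\alpha_{A_{r+1}}-\alpha_1-\alpha_{r+1}=\alpha_1+2\alpha_2+\cdots+2\alpha_r+\alpha_{r+1}=\varepsilon_1+\varepsilon_2-\varepsilon_{r+1}-\varepsilon_{r+2}\in\mathbb{R}^{r+2}$.
   Context: $\Phi^+_{A_{r+1}}=\{\varepsilon_i-\varepsilon_j:1\le i<j\le r+2\}\subset\mathbb{R}^{r+2}$, $\alpha_i=\varepsilon_i-\varepsilon_{i+1}$; for $\Lambda\subseteq\Phi^+_{A_{r+1}}$, $K_\Lambda(\mu)$ is the number of finite multisets of elements of $\Lambda$ summing to $\mu$. $\Phi^+_{B_r}=\{\varepsilon_i\pm\varepsilon_j:1\le i<j\le r\}\cup\{\varepsilon_i:1\le i\le r\}\subset\mathbb{R}^r$ and $K_{B_r}(\mu)$ is the number of finite multisets of elements of $\Phi^+_{B_r}$ summing to $\mu$. *)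

theory Defs
  imports Complex_Main "HOL-Library.Multiset"
begin

(* Vectors of R^n are modelled as functions nat => real, coordinate k for 1 <= k <= n,
   and all other coordinates 0. *)

definition eps :: "nat \<Rightarrow> nat \<Rightarrow> real" where
  "eps i = (\<lambda>k. if k = i then 1 else 0)"

definition vadd :: "(nat \<Rightarrow> real) \<Rightarrow> (nat \<Rightarrow> real) \<Rightarrow> nat \<Rightarrow> real" where
  "vadd u v = (\<lambda>k. u k + v k)"

definition vsub :: "(nat \<Rightarrow> real) \<Rightarrow> (nat \<Rightarrow> real) \<Rightarrow> nat \<Rightarrow> real" where
  "vsub u v = (\<lambda>k. u k - v k)"

definition vscale :: "real \<Rightarrow> (nat \<Rightarrow> real) \<Rightarrow> nat \<Rightarrow> real" where
  "vscale c u = (\<lambda>k. c * u k)"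

definition vsum :: "(nat \<Rightarrow> real) multiset \<Rightarrow> nat \<Rightarrow> real" where
  "vsum M = (\<lambda>k. \<Sum>v\<in>#M. v k)"

definition posA :: "nat \<Rightarrow> (nat \<Rightarrow> real) set" where
  "posA r = {vsub (eps i) (eps j) | i j. 1 \<le> i \<and> i < j \<and> j \<le> r + 2}"

definition alpha :: "nat \<Rightarrow> nat \<Rightarrow> real" where
  "alpha i = vsub (eps i) (eps (i + 1))"

definition highA :: "nat \<Rightarrow> nat \<Rightarrow> real" where
  "highA r = vsub (eps 1) (eps (r + 2))"

definition posB :: "nat \<Rightarrow> (nat \<Rightarrow> real) set" where
  "posB r = {vsub (eps i) (eps j) | i j. 1 \<le> i \<and> i < j \<and> j \<le> r}
          \<union> {vadd (eps i) (eps j) | i j. 1 \<le> i \<and> i < j \<and> j \<le> r}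
          \<union> {eps i | i. 1 \<le> i \<and> i \<le> r}"

definition highB :: "nat \<Rightarrow> real" where
  "highB = vadd (eps 1) (eps 2)"

definition K :: "(nat \<Rightarrow> real) set \<Rightarrow> (nat \<Rightarrow> real) \<Rightarrow> nat" where
  "K L mu = card {M. set_mset M \<subseteq> L \<and> vsum M = mu}"

definition KB :: "nat \<Rightarrow> (nat \<Rightarrow> real) \<Rightarrow> nat" where
  "KB r mu = K (posB r) mu"

end

theory Submission
  imports Defs
begin

lemma vsum_empty[simp]: "vsum {#} = (\<lambda>k. 0)" by (simp add: vsum_def)
lemma vsum_add[simp]: "vsum (add_mset x M) = (\<lambda>k. x k + vsum M k)" by (simp add: vsum_def)

lemma summ_nonneg:
  fixes g :: "'a \<Rightarrow> real"
  shows "(\<forall>v\<in>#M. g v \<ge> 0) \<Longrightarrow> (\<Sum>v\<in>#M. g v) \<ge> 0"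
  by (induction M) auto

lemma L0:
  fixes g :: "'a \<Rightarrow> real"
  shows "(\<forall>v\<in>#M. g v \<ge> 0) \<Longrightarrow> (\<Sum>v\<in>#M. g v) = 0 \<Longrightarrow> \<forall>v\<in>#M. g v = 0"
proof (induction M)
  case empty then show ?case by simp
next
  case (add x M)
  have hM: "\<forall>v\<in>#M. g v \<ge> 0" using add.prems(1) by simp
  have hx: "g x \<ge> 0" using add.prems(1) by simp
  have s: "g x + (\<Sum>v\<in>#M. g v) = 0" using add.prems(2) by simp
  have "(\<Sum>v\<in>#M. g v) \<ge> 0" using hM by (rule summ_nonneg)
  then have gx: "g x = 0" and sM: "(\<Sum>v\<in>#M. g v) = 0" using hx s by linarith+
  have "\<forall>v\<in>#M. g v = 0" using add.IH[OF hM sM] .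
  then show ?case using gx by simp
qed

lemma le_summ:
  fixes g :: "'a \<Rightarrow> real"
  assumes "\<forall>v\<in>#M. g v \<ge> 0" "y \<in># M"
  shows "g y \<le> (\<Sum>v\<in>#M. g v)"
proof -
  obtain N where N: "M = add_mset y N" using assms(2) by (rule mset_add)
  have "\<forall>v\<in>#N. g v \<ge> 0" using assms(1) N by simp
  then have "(\<Sum>v\<in>#N. g v) \<ge> 0" by (rule summ_nonneg)
  then show ?thesis using N by simp
qed

lemma L1:
  fixes g :: "'a \<Rightarrow> real"
  shows "(\<forall>v\<in>#M. g v = 0 \<or> g v = 1) \<Longrightarrow> (\<Sum>v\<in>#M. g v) = 1 \<Longrightarrow>
    \<exists>x M'. M = add_mset x M' \<and> g x = 1 \<and> (\<forall>v\<in>#M'. g v = 0)"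
proof (induction M)
  case empty then show ?case by simp
next
  case (add x M)
  have hM: "\<forall>v\<in>#M. g v = 0 \<or> g v = 1" using add.prems(1) by simp
  have hx: "g x = 0 \<or> g x = 1" using add.prems(1) by simp
  have s: "g x + (\<Sum>v\<in>#M. g v) = 1" using add.prems(2) by simp
  have nn: "\<forall>v\<in>#M. g v \<ge> 0" using hM by fastforce
  show ?case
  proof (cases "g x = 1")
    case True
    then have "(\<Sum>v\<in>#M. g v) = 0" using s by simp
    then have "\<forall>v\<in>#M. g v = 0" using L0[OF nn] by blast
    then show ?thesis using True by blast
  next
    case False
    then have gx: "g x = 0" using hx by blast
    then have sM: "(\<Sum>v\<in>#M. g v) = 1" using s by simp
    obtain y M' where "M = add_mset y M'" "g y = 1" "\<forall>v\<in>#M'. g v = 0"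
      using add.IH[OF hM sM] by blast
    then show ?thesis using gx
      by (intro exI[of _ y] exI[of _ "add_mset x M'"]) simp
  qed
qed

lemma L2:
  fixes g :: "'a \<Rightarrow> real"
  shows "(\<forall>v\<in>#M. g v = 0 \<or> g v = 1 \<or> g v = 2) \<Longrightarrow> (\<Sum>v\<in>#M. g v) = 2 \<Longrightarrow>
    (\<exists>x M'. M = add_mset x M' \<and> g x = 2 \<and> (\<forall>v\<in>#M'. g v = 0)) \<or>
    (\<exists>x y M'. M = add_mset x (add_mset y M') \<and> g x = 1 \<and> g y = 1 \<and> (\<forall>v\<in>#M'. g v = 0))"
proof (induction M)
  case empty then show ?case by simp
next
  case (add x M)
  have hM: "\<forall>v\<in>#M. g v = 0 \<or> g v = 1 \<or> g v = 2" using add.prems(1) by simp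
  have hx: "g x = 0 \<or> g x = 1 \<or> g x = 2" using add.prems(1) by simp
  have s: "g x + (\<Sum>v\<in>#M. g v) = 2" using add.prems(2) by simp
  have nn: "\<forall>v\<in>#M. g v \<ge> 0" using hM by fastforce
  consider "g x = 0" | "g x = 1" | "g x = 2" using hx by blast
  then show ?case
  proof cases
    case 1
    then have sM: "(\<Sum>v\<in>#M. g v) = 2" using s by simp
    from add.IH[OF hM sM] show ?thesis
    proof
      assume "\<exists>x M'. M = add_mset x M' \<and> g x = 2 \<and> (\<forall>v\<in>#M'. g v = 0)"
      then obtain y M' where "M = add_mset y M'" "g y = 2" "\<forall>v\<in>#M'. g v = 0" by blast
      then show ?thesis using 1
        by (intro disjI1 exI[of _ y] exI[of _ "add_mset x M'"]) simp
    next
      assume "\<exists>x y M'. M = add_mset x (add_mset y M') \<and> g x = 1 \<and> g y = 1 \<and> (\<forall>v\<in>#M'. g v = 0)"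
      then obtain y z M' where "M = add_mset y (add_mset z M')" "g y = 1" "g z = 1" "\<forall>v\<in>#M'. g v = 0" by blast
      then show ?thesis using 1
        by (intro disjI2 exI[of _ y] exI[of _ z] exI[of _ "add_mset x M'"]) (simp add: add_mset_commute)
    qed
  next
    case 2
    then have sM: "(\<Sum>v\<in>#M. g v) = 1" using s by simp
    have "\<forall>v\<in>#M. g v = 0 \<or> g v = 1"
    proof
      fix v assume v: "v \<in># M"
      have "g v \<le> 1" using le_summ[OF nn v] sM by simp
      then show "g v = 0 \<or> g v = 1" using hM v by fastforce
    qed
    then obtain y M' where "M = add_mset y M'" "g y = 1" "\<forall>v\<in>#M'. g v = 0"
      using L1[of M g] sM by blast
    then show ?thesis using 2 by (intro disjI2 exI[of _ x] exI[of _ y] exI[of _ M']) simp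
  next
    case 3
    then have "(\<Sum>v\<in>#M. g v) = 0" using s by simp
    then have "\<forall>v\<in>#M. g v = 0" using L0[OF nn] by blast
    then show ?thesis using 3 by blast
  qed
qed

lemma eps_app[simp]: "eps i k = (if k = i then 1 else 0)" by (simp add: eps_def)
lemma vsub_app[simp]: "vsub u v k = u k - v k" by (simp add: vsub_def)
lemma vadd_app[simp]: "vadd u v k = u k + v k" by (simp add: vadd_def)

lemma summ_neg: "(\<Sum>v\<in>#M. - v k) = - vsum M k"
  by (induction M) auto

definition inner :: "nat \<Rightarrow> (nat \<Rightarrow> real) set" where
  "inner r = {vsub (eps i) (eps j) | i j. 1 \<le> i \<and> i < j \<and> j \<le> r}"

definition TT :: "nat \<Rightarrow> ((nat \<Rightarrow> real) multiset \<times> nat \<times> nat) set" where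
  "TT r = {(M0, a, b). a \<in> {1..r} \<and> b \<in> {1..r} \<and> set_mset M0 \<subseteq> inner r \<and>
      vsum M0 = (\<lambda>k. eps 1 k + eps 2 k - eps a k - eps b k)}"

definition fA :: "nat \<Rightarrow> ((nat \<Rightarrow> real) multiset \<times> nat \<times> nat) \<Rightarrow> (nat \<Rightarrow> real) multiset" where
  "fA r = (\<lambda>(M0, a, b). add_mset (vsub (eps a) (eps (r+1))) (add_mset (vsub (eps b) (eps (r+2))) M0))"

definition SA :: "nat \<Rightarrow> (nat \<Rightarrow> real) multiset set" where
  "SA r = {M. set_mset M \<subseteq> posA r - {alpha (r + 1)} \<and> vsum M = (\<lambda>k. eps 1 k + eps 2 k - eps (r+1) k - eps (r+2) k)}"

lemma tgtA: "vsub (vsub (vscale 2 (highA r)) (alpha 1)) (alpha (r + 1)) =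
   (\<lambda>k. eps 1 k + eps 2 k - eps (r+1) k - eps (r+2) k)"
  by (auto simp: fun_eq_iff vscale_def highA_def alpha_def)

lemma inner_A:
  assumes "v \<in> inner r" shows "v \<in> posA r - {alpha (r + 1)}"
proof -
  obtain i j where ij: "1 \<le> i" "i < j" "j \<le> r" "v = vsub (eps i) (eps j)"
    using assms unfolding inner_def by blast
  have "v \<in> posA r" unfolding posA_def
    by (rule CollectI, rule exI[of _ i], rule exI[of _ j]) (use ij in simp)
  moreover have "v \<noteq> alpha (r + 1)"
  proof
    assume "v = alpha (r + 1)"
    then have "v (r+1) = alpha (r + 1) (r+1)" by simp
    then show False using ij by (simp add: alpha_def)
  qed
  ultimately show ?thesis by blast
qed

lemma inner_0: "v \<in> inner r \<Longrightarrow> k > r \<Longrightarrow> v k = 0"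
  by (auto simp: inner_def)

lemma rootA: "v \<in> posA r - {alpha (r + 1)} \<Longrightarrow>
   \<exists>i j. 1 \<le> i \<and> i < j \<and> j \<le> r + 2 \<and> i \<noteq> r + 1 \<and> v = vsub (eps i) (eps j)"
proof -
  assume v: "v \<in> posA r - {alpha (r + 1)}"
  then obtain i j where ij: "1 \<le> i" "i < j" "j \<le> r + 2" "v = vsub (eps i) (eps j)"
    by (auto simp: posA_def)
  have "i \<noteq> r + 1"
  proof
    assume "i = r + 1"
    then have "j = r + 2" using ij by auto
    then show False using v ij \<open>i = r + 1\<close> by (auto simp: alpha_def)
  qed
  then show ?thesis using ij by blast
qed

lemma fA_in: "x \<in> TT r \<Longrightarrow> fA r x \<in> SA r"
proof -
  assume "x \<in> TT r"
  then obtain M0 a b where x: "x = (M0, a, b)" "a \<in> {1..r}" "b \<in> {1..r}" "set_mset M0 \<subseteq> inner r"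
    "vsum M0 = (\<lambda>k. eps 1 k + eps 2 k - eps a k - eps b k)"
    by (auto simp: TT_def)
  have 1: "vsub (eps a) (eps (r+1)) \<in> posA r - {alpha (r + 1)}"
  proof
    show "vsub (eps a) (eps (r+1)) \<in> posA r" unfolding posA_def using x(2) by force
    show "vsub (eps a) (eps (r+1)) \<notin> {alpha (r + 1)}"
    proof
      assume "vsub (eps a) (eps (r+1)) \<in> {alpha (r + 1)}"
      then have "vsub (eps a) (eps (r+1)) (r+2) = alpha (r + 1) (r+2)" by simp
      then show False using x(2) by (simp add: alpha_def)
    qed
  qed
  have 2: "vsub (eps b) (eps (r+2)) \<in> posA r - {alpha (r + 1)}"
  proof
    show "vsub (eps b) (eps (r+2)) \<in> posA r" unfolding posA_def using x(3) by force
    show "vsub (eps b) (eps (r+2)) \<notin> {alpha (r + 1)}"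
    proof
      assume "vsub (eps b) (eps (r+2)) \<in> {alpha (r + 1)}"
      then have "vsub (eps b) (eps (r+2)) (r+1) = alpha (r + 1) (r+1)" by simp
      then show False using x(3) by (simp add: alpha_def)
    qed
  qed
  have 3: "set_mset M0 \<subseteq> posA r - {alpha (r + 1)}" using x(4) inner_A by blast
  have "vsum (fA r x) = (\<lambda>k. eps 1 k + eps 2 k - eps (r+1) k - eps (r+2) k)"
    using x(1,5) by (simp add: fA_def fun_eq_iff)
  then show ?thesis using 1 2 3 x(1) by (auto simp: SA_def fA_def)
qed

lemma fA_inj: "inj_on (fA r) (TT r)"
proof (rule inj_onI)
  fix x y assume xT: "x \<in> TT r" and yT: "y \<in> TT r" and eq: "fA r x = fA r y"
  obtain M0 a b where x: "x = (M0, a, b)" "a \<in> {1..r}" "b \<in> {1..r}" "set_mset M0 \<subseteq> inner r"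
    using xT by (auto simp: TT_def)
  obtain N0 c d where y: "y = (N0, c, d)" "c \<in> {1..r}" "d \<in> {1..r}" "set_mset N0 \<subseteq> inner r"
    using yT by (auto simp: TT_def)
  let ?P = "\<lambda>v::nat\<Rightarrow>real. v (r+1) = -1"
  let ?Q = "\<lambda>v::nat\<Rightarrow>real. v (r+2) = -1"
  have "\<forall>v\<in>#M0. v (r+1) = 0 \<and> v (r+2) = 0" using x(4) inner_0[of _ r] by (simp add: subset_iff)
  then have fM: "filter_mset ?P M0 = {#}" "filter_mset ?Q M0 = {#}" by auto
  have "\<forall>v\<in>#N0. v (r+1) = 0 \<and> v (r+2) = 0" using y(4) inner_0[of _ r] by (simp add: subset_iff)
  then have fN: "filter_mset ?P N0 = {#}" "filter_mset ?Q N0 = {#}" by auto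
  have "filter_mset ?P (fA r x) = {#vsub (eps a) (eps (r+1))#}"
    using fM x by (auto simp: fA_def)
  moreover have "filter_mset ?P (fA r y) = {#vsub (eps c) (eps (r+1))#}"
    using fN y by (auto simp: fA_def)
  ultimately have "vsub (eps a) (eps (r+1)) = vsub (eps c) (eps (r+1))" using eq by simp
  then have "vsub (eps a) (eps (r+1)) a = vsub (eps c) (eps (r+1)) a" by simp
  then have ac: "a = c" using x y by (auto split: if_splits)
  have "filter_mset ?Q (fA r x) = {#vsub (eps b) (eps (r+2))#}"
    using fM x by (auto simp: fA_def)
  moreover have "filter_mset ?Q (fA r y) = {#vsub (eps d) (eps (r+2))#}"
    using fN y by (auto simp: fA_def)
  ultimately have "vsub (eps b) (eps (r+2)) = vsub (eps d) (eps (r+2))" using eq by simp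
  then have "vsub (eps b) (eps (r+2)) b = vsub (eps d) (eps (r+2)) b" by simp
  then have bd: "b = d" using x y by (auto split: if_splits)
  show "x = y" using eq ac bd x y by (simp add: fA_def)
qed

lemma fA_surj:
  assumes r: "r \<ge> 2" and M: "M \<in> SA r"
  shows "M \<in> fA r ` TT r"
proof -
  have Mroots: "set_mset M \<subseteq> posA r - {alpha (r + 1)}" and
    Msum: "vsum M = (\<lambda>k. eps 1 k + eps 2 k - eps (r+1) k - eps (r+2) k)"
    using M by (auto simp: SA_def)
  have g1: "\<forall>v\<in>#M. - v (r+1) = 0 \<or> - v (r+1) = 1"
  proof
    fix v assume "v \<in># M"
    then obtain i j where "1 \<le> i" "i < j" "j \<le> r + 2" "i \<noteq> r + 1" "v = vsub (eps i) (eps j)"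
      using rootA Mroots by blast
    then show "- v (r+1) = 0 \<or> - v (r+1) = 1" by auto
  qed
  have s1: "(\<Sum>v\<in>#M. - v (r+1)) = 1" using Msum r by (simp add: summ_neg)
  obtain x M' where xM: "M = add_mset x M'" "- x (r+1) = 1" "\<forall>v\<in>#M'. - v (r+1) = 0"
    using L1[of M "\<lambda>v. - v (r+1)"] g1 s1 by blast
  obtain a where a: "a \<in> {1..r}" "x = vsub (eps a) (eps (r+1))"
  proof -
    obtain i j where "1 \<le> i" "i < j" "j \<le> r + 2" "i \<noteq> r + 1" "x = vsub (eps i) (eps j)"
      using rootA Mroots xM(1) by (metis insert_DiffM2 insert_subset set_mset_add_mset_insert union_single_eq_member)
    moreover then have "j = r + 1" using xM(2) by (auto split: if_splits)
    ultimately show ?thesis using that[of i] by auto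
  qed
  have M'roots: "set_mset M' \<subseteq> posA r - {alpha (r + 1)}" using Mroots xM(1) by auto
  have g2: "\<forall>v\<in>#M'. - v (r+2) = 0 \<or> - v (r+2) = 1"
  proof
    fix v assume "v \<in># M'"
    then obtain i j where "1 \<le> i" "i < j" "j \<le> r + 2" "i \<noteq> r + 1" "v = vsub (eps i) (eps j)"
      using rootA M'roots by blast
    then show "- v (r+2) = 0 \<or> - v (r+2) = 1" by auto
  qed
  have "vsum M (r+2) = x (r+2) + vsum M' (r+2)" using xM(1) by simp
  then have s2: "(\<Sum>v\<in>#M'. - v (r+2)) = 1" using Msum a r by (simp add: summ_neg)
  obtain y M0 where yM: "M' = add_mset y M0" "- y (r+2) = 1" "\<forall>v\<in>#M0. - v (r+2) = 0"
    using L1[of M' "\<lambda>v. - v (r+2)"] g2 s2 by blast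
  have y0: "y (r+1) = 0" using xM(3) yM(1) by simp
  obtain b where b: "b \<in> {1..r}" "y = vsub (eps b) (eps (r+2))"
  proof -
    obtain i j where ij: "1 \<le> i" "i < j" "j \<le> r + 2" "i \<noteq> r + 1" "y = vsub (eps i) (eps j)"
      using rootA M'roots yM(1) by (metis insert_DiffM2 insert_subset set_mset_add_mset_insert union_single_eq_member)
    moreover then have "j = r + 2" using yM(2) by (auto split: if_splits)
    moreover have "i \<le> r" using ij y0 \<open>j = r + 2\<close> by (auto split: if_splits)
    ultimately show ?thesis using that[of i] by auto
  qed
  have M0inner: "set_mset M0 \<subseteq> inner r"
  proof
    fix v assume v: "v \<in># M0"
    then obtain i j where ij: "1 \<le> i" "i < j" "j \<le> r + 2" "i \<noteq> r + 1" "v = vsub (eps i) (eps j)"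
      using rootA M'roots yM(1) by (metis insert_subset set_mset_add_mset_insert subsetD union_single_eq_member)
    have "v (r+1) = 0" using xM(3) yM(1) v by simp
    moreover have "v (r+2) = 0" using yM(3) v by simp
    ultimately have "j \<le> r" using ij by (auto split: if_splits)
    then show "v \<in> inner r" using ij unfolding inner_def by blast
  qed
  have "vsum M0 = (\<lambda>k. eps 1 k + eps 2 k - eps a k - eps b k)"
  proof
    fix k
    have "vsum M k = x k + (y k + vsum M0 k)" using xM(1) yM(1) by simp
    then show "vsum M0 k = eps 1 k + eps 2 k - eps a k - eps b k"
      using Msum a b by (simp add: fun_eq_iff)
  qed
  then have "(M0, a, b) \<in> TT r" using a b M0inner by (auto simp: TT_def)
  moreover have "fA r (M0, a, b) = M" using xM(1) yM(1) a b by (simp add: fA_def)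
  ultimately show ?thesis by force
qed

lemma card_A: "r \<ge> 2 \<Longrightarrow> card (SA r) = card (TT r)"
proof -
  assume r: "r \<ge> 2"
  have "bij_betw (fA r) (TT r) (SA r)"
    unfolding bij_betw_def using fA_inj fA_in fA_surj[OF r] by blast
  then show ?thesis by (simp add: bij_betw_same_card)
qed

definition sig :: "nat \<Rightarrow> (nat \<Rightarrow> real) \<Rightarrow> real" where
  "sig r v = (\<Sum>k\<in>{1..r}. v k)"

lemma sig_vsum: "sig r (vsum M) = (\<Sum>v\<in>#M. sig r v)"
  by (induction M) (auto simp: sig_def sum.distrib)

lemma sig_eps: "sig r (eps a) = (if a \<in> {1..r} then 1 else 0)"
  unfolding sig_def eps_def by (simp add: sum.delta)

lemma sig_vsub: "sig r (vsub u v) = sig r u - sig r v"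
  unfolding sig_def by (simp add: sum_subtractf)

lemma sig_vadd: "sig r (vadd u v) = sig r u + sig r v"
  unfolding sig_def by (simp add: sum.distrib)

lemma sig_inner: "v \<in> inner r \<Longrightarrow> sig r v = 0"
  by (auto simp: inner_def sig_vsub sig_eps)

lemma eps_inj[simp]: "eps a = eps b \<longleftrightarrow> a = b"
proof
  assume "eps a = eps b"
  then have "eps a a = eps b a" by simp
  then show "a = b" by (simp split: if_splits)
qed simp

lemma vadd_inj:
  assumes "vadd (eps a) (eps b) = vadd (eps c) (eps d)" "a < b" "c < d"
  shows "a = c \<and> b = d"
proof -
  have 1: "vadd (eps a) (eps b) a = vadd (eps c) (eps d) a" using assms(1) by simp
  have 2: "vadd (eps a) (eps b) b = vadd (eps c) (eps d) b" using assms(1) by simp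
  have 3: "vadd (eps a) (eps b) c = vadd (eps c) (eps d) c" using assms(1) by simp
  show ?thesis using 1 2 3 assms(2,3) by (auto split: if_splits)
qed

lemma pair_inj:
  assumes "add_mset (eps a) {#eps b#} = add_mset (eps c) {#eps d#}" "b \<le> a" "d \<le> c"
  shows "a = c \<and> b = d"
proof (cases "eps a = eps c")
  case True
  then show ?thesis using assms(1) by simp
next
  case False
  then have "eps a = eps d" "eps b = eps c" using assms(1) by (auto simp: add_eq_conv_ex)
  then show ?thesis using assms(2,3) by simp
qed

definition fB :: "nat \<Rightarrow> ((nat \<Rightarrow> real) multiset \<times> nat \<times> nat) \<Rightarrow> (nat \<Rightarrow> real) multiset" where
  "fB r = (\<lambda>(M0, a, b). if a < b then add_mset (vadd (eps a) (eps b)) M0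
                        else add_mset (eps a) (add_mset (eps b) M0))"

definition SB :: "nat \<Rightarrow> (nat \<Rightarrow> real) multiset set" where
  "SB r = {M. set_mset M \<subseteq> posB r \<and> vsum M = highB}"

lemma inner_B: "v \<in> inner r \<Longrightarrow> v \<in> posB r"
  by (auto simp: inner_def posB_def)

lemma fB_in: "x \<in> TT r \<Longrightarrow> fB r x \<in> SB r"
proof -
  assume "x \<in> TT r"
  then obtain M0 a b where x: "x = (M0, a, b)" "a \<in> {1..r}" "b \<in> {1..r}" "set_mset M0 \<subseteq> inner r"
    "vsum M0 = (\<lambda>k. eps 1 k + eps 2 k - eps a k - eps b k)"
    by (auto simp: TT_def)
  have 3: "set_mset M0 \<subseteq> posB r" using x(4) inner_B by blast
  show ?thesis
  proof (cases "a < b")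
    case True
    have "vadd (eps a) (eps b) \<in> {vadd (eps i) (eps j) | i j. 1 \<le> i \<and> i < j \<and> j \<le> r}"
      by (rule CollectI, rule exI[of _ a], rule exI[of _ b]) (use x(2,3) True in simp)
    then have "vadd (eps a) (eps b) \<in> posB r" unfolding posB_def by blast
    moreover have "vsum (fB r x) = highB"
      using x(1,5) True by (simp add: fB_def fun_eq_iff highB_def)
    ultimately show ?thesis using 3 x(1) True by (auto simp: SB_def fB_def)
  next
    case False
    have "eps a \<in> {eps i | i. 1 \<le> i \<and> i \<le> r}" "eps b \<in> {eps i | i. 1 \<le> i \<and> i \<le> r}"
      using x(2,3) by auto
    then have "eps a \<in> posB r" "eps b \<in> posB r" unfolding posB_def by blast+
    moreover have "vsum (fB r x) = highB"
      using x(1,5) False by (simp add: fB_def fun_eq_iff highB_def)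
    ultimately show ?thesis using 3 x(1) False by (auto simp: SB_def fB_def)
  qed
qed

lemma fB_inj: "inj_on (fB r) (TT r)"
proof (rule inj_onI)
  fix x y assume xT: "x \<in> TT r" and yT: "y \<in> TT r" and eq: "fB r x = fB r y"
  obtain M0 a b where x: "x = (M0, a, b)" "a \<in> {1..r}" "b \<in> {1..r}" "set_mset M0 \<subseteq> inner r"
    using xT by (auto simp: TT_def)
  obtain N0 c d where y: "y = (N0, c, d)" "c \<in> {1..r}" "d \<in> {1..r}" "set_mset N0 \<subseteq> inner r"
    using yT by (auto simp: TT_def)
  let ?P = "\<lambda>v::nat\<Rightarrow>real. sig r v = 2"
  let ?Q = "\<lambda>v::nat\<Rightarrow>real. sig r v = 1"
  have "\<forall>v\<in>#M0. sig r v = 0" using x(4) sig_inner by (auto simp add: subset_iff)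
  then have fM: "filter_mset ?P M0 = {#}" "filter_mset ?Q M0 = {#}" by auto
  have "\<forall>v\<in>#N0. sig r v = 0" using y(4) sig_inner by (auto simp add: subset_iff)
  then have fN: "filter_mset ?P N0 = {#}" "filter_mset ?Q N0 = {#}" by auto
  have FP: "filter_mset ?P (fB r x) = (if a < b then {#vadd (eps a) (eps b)#} else {#})"
    using fM x by (auto simp: fB_def sig_eps sig_vadd)
  have FQ: "filter_mset ?Q (fB r x) = (if a < b then {#} else {#eps a, eps b#})"
    using fM x by (auto simp: fB_def sig_eps sig_vadd)
  have GP: "filter_mset ?P (fB r y) = (if c < d then {#vadd (eps c) (eps d)#} else {#})"
    using fN y by (auto simp: fB_def sig_eps sig_vadd)
  have GQ: "filter_mset ?Q (fB r y) = (if c < d then {#} else {#eps c, eps d#})"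
    using fN y by (auto simp: fB_def sig_eps sig_vadd)
  have "a = c \<and> b = d"
  proof (cases "a < b")
    case True
    then have cd: "c < d" using FP GP eq by (auto split: if_splits)
    then show ?thesis using FP GP eq True vadd_inj by (auto split: if_splits)
  next
    case False
    then have cd: "\<not> c < d" using FP GP eq by (auto split: if_splits)
    then show ?thesis using FQ GQ eq False pair_inj[of a b c d] by auto
  qed
  then show "x = y" using eq x y by (auto simp: fB_def split: if_splits)
qed

lemma rootB:
  assumes "v \<in> posB r"
  obtains (sub) i j where "1 \<le> i" "i < j" "j \<le> r" "v = vsub (eps i) (eps j)"
    | (add) i j where "1 \<le> i" "i < j" "j \<le> r" "v = vadd (eps i) (eps j)"
    | (short) i where "1 \<le> i" "i \<le> r" "v = eps i"
  using assms unfolding posB_def by blast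

lemma sigB: "v \<in> posB r \<Longrightarrow> sig r v = 0 \<or> sig r v = 1 \<or> sig r v = 2"
  by (erule rootB) (simp_all add: sig_vsub sig_vadd sig_eps)

lemma sigB0: "v \<in> posB r \<Longrightarrow> sig r v = 0 \<Longrightarrow> v \<in> inner r"
proof (erule rootB)
  fix i j assume "1 \<le> i" "i < j" "j \<le> r" "v = vsub (eps i) (eps j)"
  then show "v \<in> inner r" unfolding inner_def by blast
qed (simp_all add: sig_vsub sig_vadd sig_eps)

lemma sigB1: "v \<in> posB r \<Longrightarrow> sig r v = 1 \<Longrightarrow> \<exists>i. i \<in> {1..r} \<and> v = eps i"
proof (erule rootB)
  fix i assume "1 \<le> i" "i \<le> r" "v = eps i"
  then show "\<exists>i. i \<in> {1..r} \<and> v = eps i" by auto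
qed (simp_all add: sig_vsub sig_vadd sig_eps)

lemma sigB2: "v \<in> posB r \<Longrightarrow> sig r v = 2 \<Longrightarrow> \<exists>i j. i \<in> {1..r} \<and> j \<in> {1..r} \<and> i < j \<and> v = vadd (eps i) (eps j)"
proof (erule rootB)
  fix i j assume "1 \<le> i" "i < j" "j \<le> r" "v = vadd (eps i) (eps j)"
  then have "i \<in> {1..r} \<and> j \<in> {1..r} \<and> i < j \<and> v = vadd (eps i) (eps j)" by simp
  then show "\<exists>i j. i \<in> {1..r} \<and> j \<in> {1..r} \<and> i < j \<and> v = vadd (eps i) (eps j)" by blast
qed (simp_all add: sig_vsub sig_vadd sig_eps)

lemma fB_surj:
  assumes r: "r \<ge> 2" and M: "M \<in> SB r"
  shows "M \<in> fB r ` TT r"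
proof -
  have Mroots: "set_mset M \<subseteq> posB r" and Msum: "vsum M = highB"
    using M by (auto simp: SB_def)
  have g: "\<forall>v\<in>#M. sig r v = 0 \<or> sig r v = 1 \<or> sig r v = 2" using Mroots sigB by blast
  have "sig r highB = 2" using r by (simp add: highB_def sig_vadd sig_eps)
  then have s: "(\<Sum>v\<in>#M. sig r v) = 2" using Msum sig_vsum by metis
  have Mpt: "\<And>k. vsum M k = eps 1 k + eps 2 k" using Msum by (simp add: highB_def)
  from L2[of M "sig r", OF g s] show ?thesis
  proof
    assume "\<exists>x M'. M = add_mset x M' \<and> sig r x = 2 \<and> (\<forall>v\<in>#M'. sig r v = 0)"
    then obtain x M' where xM: "M = add_mset x M'" "sig r x = 2" "\<forall>v\<in>#M'. sig r v = 0" by blast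
    obtain a b where ab: "a \<in> {1..r}" "b \<in> {1..r}" "a < b" "x = vadd (eps a) (eps b)"
      using sigB2[of x r] xM Mroots by auto
    have inn: "set_mset M' \<subseteq> inner r" using xM Mroots sigB0 by auto
    have "vsum M' = (\<lambda>k. eps 1 k + eps 2 k - eps a k - eps b k)"
    proof
      fix k
      have "vsum M k = x k + vsum M' k" using xM(1) by simp
      then show "vsum M' k = eps 1 k + eps 2 k - eps a k - eps b k" using Mpt[of k] ab by simp
    qed
    then have "(M', a, b) \<in> TT r" using ab inn by (auto simp: TT_def)
    moreover have "fB r (M', a, b) = M" using xM(1) ab by (simp add: fB_def)
    ultimately show ?thesis by force
  next
    assume "\<exists>x y M'. M = add_mset x (add_mset y M') \<and> sig r x = 1 \<and> sig r y = 1 \<and> (\<forall>v\<in>#M'. sig r v = 0)"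
    then obtain x y M' where xM: "M = add_mset x (add_mset y M')" "sig r x = 1" "sig r y = 1" "\<forall>v\<in>#M'. sig r v = 0" by blast
    obtain a where a: "a \<in> {1..r}" "x = eps a" using sigB1[of x r] xM Mroots by auto
    obtain b where b: "b \<in> {1..r}" "y = eps b" using sigB1[of y r] xM Mroots by auto
    have inn: "set_mset M' \<subseteq> inner r" using xM Mroots sigB0 by auto
    have vs: "vsum M' = (\<lambda>k. eps 1 k + eps 2 k - eps a k - eps b k)"
    proof
      fix k
      have "vsum M k = x k + (y k + vsum M' k)" using xM(1) by simp
      then show "vsum M' k = eps 1 k + eps 2 k - eps a k - eps b k" using Mpt[of k] a b by simp
    qed
    show ?thesis
    proof (cases "a < b")
      case False
      have "(M', a, b) \<in> TT r" using a b inn vs by (auto simp: TT_def)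
      moreover have "fB r (M', a, b) = M" using xM(1) a b False by (simp add: fB_def)
      ultimately show ?thesis by force
    next
      case True
      have "(M', b, a) \<in> TT r" using a b inn vs by (auto simp: TT_def fun_eq_iff)
      moreover have "fB r (M', b, a) = M" using xM(1) a b True by (simp add: fB_def add_mset_commute)
      ultimately show ?thesis by force
    qed
  qed
qed

lemma card_B: "r \<ge> 2 \<Longrightarrow> card (SB r) = card (TT r)"
proof -
  assume r: "r \<ge> 2"
  have "bij_betw (fB r) (TT r) (SB r)"
    unfolding bij_betw_def using fB_inj fB_in fB_surj[OF r] by blast
  then show ?thesis by (simp add: bij_betw_same_card)
qed

theorem mainTheorem13:
  fixes r :: nat
  assumes "r \<ge> 2"
  shows "KB r highB =
         K (posA r - {alpha (r + 1)})
           (vsub (vsub (vscale 2 (highA r)) (alpha 1)) (alpha (r + 1)))"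
proof -
  have "KB r highB = card (SB r)" by (simp add: KB_def K_def SB_def)
  moreover have "K (posA r - {alpha (r + 1)})
           (vsub (vsub (vscale 2 (highA r)) (alpha 1)) (alpha (r + 1))) = card (SA r)"
    unfolding K_def SA_def tgtA by (rule refl)
  ultimately show ?thesis using card_A[OF assms] card_B[OF assms] by simp
qed

end
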